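(* (a) For all $h,s\in\mathbb R$ there is $C_{h,s}<\infty$ such that for every $f\in L^2(\nu^* )$, $$\|\theta_sH_h[f]\|_{L^{2d}(\nu^* )}\le C_{h,s}\|f\|_{L^2(\nu^* )};$$ in particular $\theta_sH_h[f]\in L^{2d}(\nu^* )$. (b) The map $h\mapsto H_h$ from $I:=(h^*-1,h^*+1)$ to the space $B(L^2(\nu^* ),L^{2d}(\nu^* ))$ of bounded linear operators is (strongly) continuous.
   Context: Let $d\ge2$, $\sigma_\nu^2=\frac d{d-1}$, $\sigma_Y^2=\frac{d+1}d$, $\rho_\nu$ and $\rho_Y$ the densities of $\mathcal N(0,\sigma_\nu^2)$ and $\mathcal N(0,\sigma_Y^2)$, and $\nu=\mathcal N(0,\sigma_\nu^2)$. Let $h^*\in(0,\infty)$ be the critical level of level-set percolation of the Gaussian free field on the $(d+1)$-regular tree (for the purposes of this statement $h^*$ may be regarded as a fixed real number). Let $\nu^*$ be the probability measure with density $a\mapsto\rho_\nu(a+h^* )$. For $s\in\mathbb R$, $\theta_s$ is the shift $\theta_sg(x)=g(x+s)$. For $h\in\mathbb R$ define the operator $$H_h[f](a)=1_{[0,\infty)}(a)\int_0^\infty f(x)\,\rho_Y\Big(x-\frac ad+\frac{d-1}d h\Big)dx.$$ *)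

theory Defs
  imports "HOL-Probability.Probability"
begin

definition sigma_nu_sq :: "nat \<Rightarrow> real" where
  "sigma_nu_sq d = real d / (real d - 1)"

definition sigma_Y_sq :: "nat \<Rightarrow> real" where
  "sigma_Y_sq d = (real d + 1) / real d"

definition rho_nu :: "nat \<Rightarrow> real \<Rightarrow> real" where
  "rho_nu d = normal_density 0 (sqrt (sigma_nu_sq d))"

definition rho_Y :: "nat \<Rightarrow> real \<Rightarrow> real" where
  "rho_Y d = normal_density 0 (sqrt (sigma_Y_sq d))"

definition nu_star :: "nat \<Rightarrow> real \<Rightarrow> real measure" where
  "nu_star d hstar = density lborel (\<lambda>a. ennreal (rho_nu d (a + hstar)))"

definition theta :: "real \<Rightarrow> (real \<Rightarrow> real) \<Rightarrow> real \<Rightarrow> real" where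
  "theta s g = (\<lambda>x. g (x + s))"

definition H_op :: "nat \<Rightarrow> real \<Rightarrow> (real \<Rightarrow> real) \<Rightarrow> real \<Rightarrow> real" where
  "H_op d h f = (\<lambda>a. indicator {0..} a *
      (LINT x:{0..}|lborel. f x * rho_Y d (x - a / real d + (real d - 1) / real d * h)))"

definition memLp :: "'a measure \<Rightarrow> real \<Rightarrow> ('a \<Rightarrow> real) \<Rightarrow> bool" where
  "memLp M p f \<longleftrightarrow> f \<in> borel_measurable M \<and> integrable M (\<lambda>x. \<bar>f x\<bar> powr p)"

definition Lp_norm :: "'a measure \<Rightarrow> real \<Rightarrow> ('a \<Rightarrow> real) \<Rightarrow> real" where
  "Lp_norm M p f = (LINT x|M. \<bar>f x\<bar> powr p) powr (1 / p)"

end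

theory Submission
  imports Defs
begin


lemma gauss:
  fixes p q r :: real assumes p: "p > 0"
  shows "integrable lborel (\<lambda>x. exp (-p*x^2 + q*x + r))"
    "(LINT x|lborel. exp (-p*x^2 + q*x + r)) = sqrt (pi/p) * exp (q^2/(4*p) + r)"
proof -
  define mu where "mu = q/(2*p)"
  define sgm where "sgm = sqrt (1/(2*p))"
  define K where "K = sqrt (pi/p) * exp (q^2/(4*p) + r)"
  have sp: "sgm > 0" using p by (simp add: sgm_def)
  have s2: "sgm^2 = 1/(2*p)" using p by (simp add: sgm_def)
  have eq: "exp (-p*x^2 + q*x + r) = K * normal_density mu sgm x" for x
  proof -
    have "2*pi* sgm^2 = pi/p" using s2 p by (simp add: field_simps)
    then have "K * normal_density mu sgm x = exp (q^2/(4*p) + r) * exp (- ((x - mu)^2 * p))"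
      unfolding normal_density_def K_def s2 using p by (simp add: real_sqrt_divide)
    also have "\<dots> = exp (-p*x^2 + q*x + r)"
    proof -
      have "q^2/(4*p) + r + (- ((x - mu)^2 * p)) = -p*x^2 + q*x + r"
        using p unfolding mu_def by (simp add: field_simps power2_eq_square)
      then show ?thesis by (simp add: mult_exp_exp)
    qed
    finally show ?thesis by simp
  qed
  show "integrable lborel (\<lambda>x. exp (-p*x^2 + q*x + r))" unfolding eq using integrable_normal_density[of sgm mu] sp by simp
  show "(LINT x|lborel. exp (-p*x^2 + q*x + r)) = sqrt (pi/p) * exp (q^2/(4*p) + r)"
    unfolding eq using integral_normal_density[of sgm mu] sp by (simp add: K_def)
qed




lemma inf_bound:
  fixes I N2 K2 :: real
  assumes "N2 \<ge> 0" "K2 \<ge> 0" "\<And>t. t > 0 \<Longrightarrow> I \<le> (t*N2 + K2/t)/2"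
  shows "I \<le> sqrt N2 * sqrt K2"
proof (cases "N2 > 0 \<and> K2 > 0")
  case True
  define t where "t = sqrt K2 / sqrt N2"
  have "t > 0" using True by (simp add: t_def)
  from assms(3)[OF this] have "I \<le> (t*N2 + K2/t)/2" .
  also have "\<dots> = sqrt N2 * sqrt K2" using True unfolding t_def
    by (simp add: field_simps)
  finally show ?thesis .
next
  case False
  show ?thesis
  proof (rule ccontr)
    assume "\<not> ?thesis"
    then have I: "I > 0" using False assms(1,2) by auto
    show False
    proof (cases "N2 = 0")
      case True
      have tp: "K2/I + 1 > 0" using I assms(2) by (smt (verit) divide_nonneg_pos)
      have "I \<le> (K2 / (K2/I + 1))/2" using assms(3)[OF tp] True by simp
      also have "\<dots> = K2 * I / (2*(K2 + I))" using I assms(2) by (simp add: field_simps)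
      also have "\<dots> < I"
      proof -
        have "0 < I * K2 + I * (I * 2)" using I assms(2) by (simp add: add_nonneg_pos)
        then show ?thesis using I assms(2) by (simp add: field_simps)
      qed
      finally show False by simp
    next
      case False
      then have K: "K2 = 0" using \<open>\<not>(N2 > 0 \<and> K2 > 0)\<close> assms by auto
      have "I \<le> ((I/(N2+1))*N2)/2" using assms(3)[of "I/(N2+1)"] I assms(1) K
        by (simp add: add_pos_nonneg)
      also have "\<dots> < I"
      proof -
        have "0 < I * N2 + I * 2" using I assms(1) by (simp add: add_nonneg_pos)
        then show ?thesis using I assms(1) by (simp add: field_simps)
      qed
      finally show False by simp
    qed
  qed
qed

lemma amgm_pt:
  fixes t g u v :: real assumes "t > 0" "g > 0"
  shows "abs (u * v) \<le> (t * (u^2 * g) + v^2 / g / t) / 2"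
proof -
  have "0 \<le> (t*g*abs u - abs v)^2" by simp
  then have "2*(t*g)*abs(u * v) \<le> (t*g)^2*u^2 + v^2"
    by (simp add: power2_eq_square abs_mult algebra_simps)
  then show ?thesis using assms by (simp add: field_simps power2_eq_square)
qed




lemma cs_int:
  fixes f phi g :: "real \<Rightarrow> real" and S :: "real set"
  assumes [measurable]: "f \<in> borel_measurable borel" "phi \<in> borel_measurable borel"
    "g \<in> borel_measurable borel" "S \<in> sets borel"
  assumes gpos: "\<And>x. g x > 0"
    and i1: "integrable lborel (\<lambda>x. f x^2 * g x)"
    and i2: "integrable lborel (\<lambda>x. indicator S x * (phi x^2 / g x))"
  shows "integrable lborel (\<lambda>x. indicator S x * (f x * phi x))"
    "abs (LINT x|lborel. indicator S x * (f x * phi x))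
       \<le> sqrt (LINT x|lborel. f x^2 * g x) * sqrt (LINT x|lborel. indicator S x * (phi x^2 / g x))"
proof -
  have ind2: "(indicator S x * phi x)^2 = indicator S x * phi x^2" for x
    by (simp add: indicator_def)
  have pt: "abs (indicator S x * (f x * phi x)) \<le> (t * (f x^2 * g x) + indicator S x * (phi x^2 / g x) / t) / 2"
    if "t > 0" for t x
  proof -
    have "abs (indicator S x * (f x * phi x)) = abs (f x * (indicator S x * phi x))" by (simp add: algebra_simps)
    also have "\<dots> \<le> (t * (f x^2 * g x) + (indicator S x * phi x)^2 / g x / t) / 2"
      by (rule amgm_pt[OF that gpos])
    finally show ?thesis unfolding ind2 by simp
  qed
  have ib: "integrable lborel (\<lambda>x. (t * (f x^2 * g x) + indicator S x * (phi x^2 / g x) / t) / 2)" for t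
    by (intro integrable_divide_zero Bochner_Integration.integrable_add integrable_mult_right i1 i2)
  show int: "integrable lborel (\<lambda>x. indicator S x * (f x * phi x))"
  proof (rule Bochner_Integration.integrable_bound[OF ib[of 1]])
    show "AE x in lborel. norm (indicator S x * (f x * phi x)) \<le> norm ((1 * (f x^2 * g x) + indicator S x * (phi x^2 / g x) / 1) / 2)"
      using pt[of 1] by (intro AE_I2) (smt (verit) real_norm_def)
  qed simp
  have "abs (LINT x|lborel. indicator S x * (f x * phi x))
     \<le> sqrt (LINT x|lborel. f x^2 * g x) * sqrt (LINT x|lborel. indicator S x * (phi x^2 / g x))"
  proof (rule inf_bound)
    show "0 \<le> (LINT x|lborel. f x^2 * g x)" using gpos by (intro integral_nonneg_AE AE_I2) (simp add: less_imp_le)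
    show "0 \<le> (LINT x|lborel. indicator S x * (phi x^2 / g x))" using gpos
      by (intro integral_nonneg_AE) (auto intro!: divide_nonneg_pos)
    fix t :: real assume t: "t > 0"
    have "abs (LINT x|lborel. indicator S x * (f x * phi x)) \<le> (LINT x|lborel. abs (indicator S x * (f x * phi x)))"
      by (rule integral_abs_bound)
    also have "\<dots> \<le> (LINT x|lborel. (t * (f x^2 * g x) + indicator S x * (phi x^2 / g x) / t) / 2)"
      by (rule integral_mono[OF _ ib pt[OF t]]) (use int in auto)
    also have "\<dots> = (t * (LINT x|lborel. f x^2 * g x) + (LINT x|lborel. indicator S x * (phi x^2 / g x)) / t) / 2"
    proof -
      have j1: "integrable lborel (\<lambda>x. t * (f x^2 * g x))" using i1 by simp
      have j2: "integrable lborel (\<lambda>x. indicator S x * (phi x^2 / g x) / t)" using i2 by (rule integrable_divide_zero)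
      show ?thesis
        by (simp only: integral_divide_zero Bochner_Integration.integral_add[OF j1 j2] integral_mult_right_zero)
    qed
    finally show "abs (LINT x|lborel. indicator S x * (f x * phi x)) \<le> (t * (LINT x|lborel. f x^2 * g x) + (LINT x|lborel. indicator S x * (phi x^2 / g x)) / t) / 2" .
  qed
  then show "abs (LINT x|lborel. indicator S x * (f x * phi x))
       \<le> sqrt (LINT x|lborel. f x^2 * g x) * sqrt (LINT x|lborel. indicator S x * (phi x^2 / g x))" .
qed




definition AA :: "nat \<Rightarrow> real" where "AA d = real d / (real d + 1)"
definition BB :: "nat \<Rightarrow> real" where "BB d = (real d - 1) / (2 * real d)"
definition cY :: "nat \<Rightarrow> real" where "cY d = 1 / sqrt (2 * pi * sigma_Y_sq d)"
definition cN :: "nat \<Rightarrow> real" where "cN d = 1 / sqrt (2 * pi * sigma_nu_sq d)"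
definition al :: "nat \<Rightarrow> real" where "al d = AA d * BB d / (AA d - BB d)"
definition KC :: "nat \<Rightarrow> real" where "KC d = cY d ^ 2 / cN d * sqrt (pi / (AA d - BB d))"

lemma consts_pos:
  assumes "d \<ge> 2"
  shows "AA d > 0" "BB d > 0" "AA d - BB d > 0" "cY d > 0" "cN d > 0" "al d > 0" "KC d > 0"
    "sigma_Y_sq d > 0" "sigma_nu_sq d > 0" "al d < real d * BB d"
proof -
  have d: "real d \<ge> 2" using assms by simp
  show A: "AA d > 0" "BB d > 0" using d by (auto simp: AA_def BB_def)
  have ABe: "AA d - BB d = ((real d)^2 + 1) / (2 * real d * (real d + 1))"
    using d unfolding AA_def BB_def by (simp add: field_simps power2_eq_square)
  show AB: "AA d - BB d > 0" unfolding ABe using d by (intro divide_pos_pos mult_pos_pos) (auto simp: add_nonneg_pos)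
  show sy: "sigma_Y_sq d > 0" "sigma_nu_sq d > 0" using d by (auto simp: sigma_Y_sq_def sigma_nu_sq_def)
  show "cY d > 0" "cN d > 0" using sy by (auto simp: cY_def cN_def)
  then show "KC d > 0" using AB by (simp add: KC_def)
  show "al d > 0" using A AB by (simp add: al_def)
  have "AA d * BB d < real d * BB d * (AA d - BB d)"
  proof -
    have e1: "real d * (AA d - BB d) = ((real d)^2 + 1) / (2 * (real d + 1))"
      unfolding ABe using d by simp
    have e2: "AA d = (2 * real d) / (2 * (real d + 1))" unfolding AA_def using d by (simp add: field_simps)
    have sq: "(real d - 1)^2 > 0" using d by simp
    have "(real d - 1)^2 = (real d)^2 - 2 * real d + 1" by (simp add: power2_eq_square algebra_simps)
    then have "2 * real d < (real d)^2 + 1" using sq by linarith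
    then have "(2 * real d) / (2 * (real d + 1)) < ((real d)^2 + 1) / (2 * (real d + 1))" using d
      by (intro divide_strict_right_mono) auto
    then have "AA d < real d * (AA d - BB d)" using e1 e2 by simp
    then show ?thesis using A by (simp add: mult.commute mult.left_commute)
  qed
  then show "al d < real d * BB d" using AB by (simp add: al_def field_simps)
qed

lemma rhoY_eq: assumes "d \<ge> 2" shows "rho_Y d y = cY d * exp (- (AA d / 2) * y^2)"
proof -
  have s: "sigma_Y_sq d > 0" using consts_pos[OF assms] by simp
  have "(sqrt (sigma_Y_sq d))^2 = sigma_Y_sq d" using s by simp
  moreover have "(y - 0)^2 / (2 * sigma_Y_sq d) = (AA d / 2) * y^2"
    using assms unfolding AA_def sigma_Y_sq_def by (simp add: field_simps)
  ultimately show ?thesis unfolding rho_Y_def normal_density_def cY_def by simp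
qed

lemma rhoN_eq: assumes "d \<ge> 2" shows "rho_nu d y = cN d * exp (- BB d * y^2)"
proof -
  have s: "sigma_nu_sq d > 0" using consts_pos[OF assms] by simp
  have "(sqrt (sigma_nu_sq d))^2 = sigma_nu_sq d" using s by simp
  moreover have "(y - 0)^2 / (2 * sigma_nu_sq d) = BB d * y^2"
    using assms unfolding BB_def sigma_nu_sq_def by (simp add: field_simps)
  ultimately show ?thesis unfolding rho_nu_def normal_density_def cN_def by simp
qed

lemma rho_pos: assumes "d \<ge> 2" shows "rho_nu d y > 0" "rho_Y d y > 0"
  using consts_pos[OF assms] by (auto simp: rhoN_eq[OF assms] rhoY_eq[OF assms])

lemma rho_meas[measurable]: "rho_nu d \<in> borel_measurable borel" "rho_Y d \<in> borel_measurable borel"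
  by (auto simp: rho_nu_def rho_Y_def)

lemma rho_cont: assumes "d \<ge> 2" shows "continuous_on UNIV (rho_Y d)"
proof -
  have "rho_Y d = (\<lambda>y. cY d * exp (- (AA d / 2) * y^2))" using rhoY_eq[OF assms] by auto
  then show ?thesis by (simp add: continuous_intros)
qed




lemma exp_sq_div: "exp (u::real) ^ 2 / exp v = exp (2 * u - v)"
proof -
  have "exp (2*u) = exp u ^ 2" using exp_of_nat_mult[of 2 u] by simp
  then show ?thesis by (simp add: exp_diff)
qed
lemma quad_id:
  fixes A B b h :: real assumes "A - B > 0"
  shows "(2*A*b + 2*B*h)^2/(4*(A - B)) + (B*h^2 - A*b^2) = A*B/(A - B) * (b + h)^2"
proof -
  have ne: "A - B \<noteq> 0" using assms by simp
  have "(2*A*b + 2*B*h)^2 = 4 * (A*b + B*h)^2" by (simp add: power2_eq_square algebra_simps)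
  moreover have "4 * (A*b + B*h)^2 / (4*(A - B)) = (A*b + B*h)^2/(A - B)"
    by (rule mult_divide_mult_cancel_left) simp
  ultimately have "(2*A*b + 2*B*h)^2/(4*(A - B)) = (A*b + B*h)^2/(A - B)" by simp
  moreover have "(A*b + B*h)^2/(A - B) + (B*h^2 - A*b^2) = ((A*b + B*h)^2 + (B*h^2 - A*b^2)*(A - B))/(A - B)"
    using ne by (simp add: diff_divide_distrib add_divide_distrib)
  moreover have "(A*b + B*h)^2 + (B*h^2 - A*b^2)*(A - B) = A*B*(b + h)^2"
    by (simp add: power2_eq_square algebra_simps)
  ultimately show ?thesis by simp
qed

lemma Kint:
  assumes d: "d \<ge> 2"
  shows "integrable lborel (\<lambda>x. rho_Y d (x - b)^2 / rho_nu d (x + hs))"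
    "(LINT x|lborel. rho_Y d (x - b)^2 / rho_nu d (x + hs)) = KC d * exp (al d * (b + hs)^2)"
proof -
  note cp = consts_pos[OF d]
  define p where "p = AA d - BB d"
  define q where "q = 2 * AA d * b + 2 * BB d * hs"
  define r where "r = BB d * hs^2 - AA d * b^2"
  have eq: "rho_Y d (x - b)^2 / rho_nu d (x + hs) = (cY d^2 / cN d) * exp (-p*x^2 + q*x + r)" for x
  proof -
    have "rho_Y d (x - b)^2 / rho_nu d (x + hs)
        = (cY d^2 / cN d) * (exp (- (AA d / 2) * (x-b)^2) ^ 2 / exp (- BB d * (x+hs)^2))"
      unfolding rhoY_eq[OF d] rhoN_eq[OF d] by (simp add: power_mult_distrib)
    also have "exp (- (AA d / 2) * (x-b)^2) ^ 2 / exp (- BB d * (x+hs)^2)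
        = exp (2 * (- (AA d / 2) * (x-b)^2) - (- BB d * (x+hs)^2))"
      by (rule exp_sq_div)
    also have "2 * (- (AA d / 2) * (x-b)^2) - (- BB d * (x+hs)^2) = -p*x^2 + q*x + r"
      unfolding p_def q_def r_def by (simp add: power2_eq_square algebra_simps)
    finally show ?thesis .
  qed
  have pp: "p > 0" using cp by (simp add: p_def)
  show "integrable lborel (\<lambda>x. rho_Y d (x - b)^2 / rho_nu d (x + hs))"
    unfolding eq using gauss(1)[OF pp, of q r] by simp
  have ex: "q^2/(4*p) + r = al d * (b + hs)^2"
  proof -
    show ?thesis using quad_id[of "AA d" "BB d" b hs] pp unfolding al_def p_def q_def r_def by simp
  qed
  show "(LINT x|lborel. rho_Y d (x - b)^2 / rho_nu d (x + hs)) = KC d * exp (al d * (b + hs)^2)"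
  proof -
    have "(LINT x|lborel. rho_Y d (x - b)^2 / rho_nu d (x + hs)) = (cY d^2 / cN d) * (LINT x|lborel. exp (-p*x^2 + q*x + r))"
      unfolding eq by simp
    also have "\<dots> = KC d * exp (al d * (b + hs)^2)" unfolding gauss(2)[OF pp, of q r] ex
      by (simp add: KC_def p_def)
    finally show ?thesis .
  qed
qed

lemma Kint_ind:
  assumes d: "d \<ge> 2"
  shows "integrable lborel (\<lambda>x. indicator {0..} x * (rho_Y d (x - b)^2 / rho_nu d (x + hs)))"
    "(LINT x|lborel. indicator {0..} x * (rho_Y d (x - b)^2 / rho_nu d (x + hs))) \<le> KC d * exp (al d * (b + hs)^2)"
proof -
  note i = Kint[OF d, of b hs]
  have nn: "0 \<le> rho_Y d (x - b)^2 / rho_nu d (x + hs)" for x using rho_pos[OF d] by (simp add: less_imp_le)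
  show ii: "integrable lborel (\<lambda>x. indicator {0..} x * (rho_Y d (x - b)^2 / rho_nu d (x + hs)))"
    by (rule Bochner_Integration.integrable_bound[OF i(1)]) (auto simp: indicator_def nn)
  have "(LINT x|lborel. indicator {0..} x * (rho_Y d (x - b)^2 / rho_nu d (x + hs)))
     \<le> (LINT x|lborel. rho_Y d (x - b)^2 / rho_nu d (x + hs))"
    by (rule integral_mono[OF ii i(1)]) (auto simp: indicator_def nn)
  then show "(LINT x|lborel. indicator {0..} x * (rho_Y d (x - b)^2 / rho_nu d (x + hs))) \<le> KC d * exp (al d * (b + hs)^2)"
    using i(2) by simp
qed




lemma abs_powr2: "\<bar>y::real\<bar> powr 2 = y^2"
  using powr_realpow'[of "\<bar>y\<bar>" 2] by simp

lemma memLp2: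
  assumes d: "d \<ge> 2" and m: "memLp (nu_star d hs) 2 f"
  shows "f \<in> borel_measurable borel"
    "integrable lborel (\<lambda>x. f x^2 * rho_nu d (x + hs))"
    "Lp_norm (nu_star d hs) 2 f = sqrt (LINT x|lborel. f x^2 * rho_nu d (x + hs))"
proof -
  show fm[measurable]: "f \<in> borel_measurable borel" using m unfolding memLp_def nu_star_def by simp
  have nn: "AE x in lborel. 0 \<le> rho_nu d (x + hs)" using rho_pos[OF d] by (simp add: less_imp_le)
  have "integrable (nu_star d hs) (\<lambda>x. f x^2)" using m unfolding memLp_def abs_powr2 by simp
  then show "integrable lborel (\<lambda>x. f x^2 * rho_nu d (x + hs))"
    unfolding nu_star_def by (subst (asm) integrable_density) (auto simp: nn mult.commute)
  have "(LINT x|nu_star d hs. \<bar>f x\<bar> powr 2) = (LINT x|lborel. f x^2 * rho_nu d (x + hs))"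
    unfolding nu_star_def abs_powr2 by (subst integral_density) (auto simp: nn mult.commute)
  moreover have "0 \<le> (LINT x|lborel. f x^2 * rho_nu d (x + hs))"
    using nn by (intro integral_nonneg_AE) auto
  ultimately show "Lp_norm (nu_star d hs) 2 f = sqrt (LINT x|lborel. f x^2 * rho_nu d (x + hs))"
    unfolding Lp_norm_def by (simp add: powr_half_sqrt)
qed

definition cc :: "nat \<Rightarrow> real" where "cc d = (real d - 1) / real d"

lemma Hint:
  assumes d: "d \<ge> 2" and m: "memLp (nu_star d hs) 2 f"
  shows "integrable lborel (\<lambda>x. indicator {0..} x * (f x * rho_Y d (x - a / real d + cc d * h)))"
    "\<bar>LINT x|lborel. indicator {0..} x * (f x * rho_Y d (x - a / real d + cc d * h))\<bar>
       \<le> Lp_norm (nu_star d hs) 2 f * sqrt (KC d * exp (al d * (a / real d - cc d * h + hs)^2))"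
proof -
  note mm = memLp2[OF d m]
  define b where "b = a / real d - cc d * h"
  have eqb: "x - a / real d + cc d * h = x - b" for x by (simp add: b_def)
  have [measurable]: "f \<in> borel_measurable borel" by (rule mm(1))
  have pm: "(\<lambda>x. rho_Y d (x - b)) \<in> borel_measurable borel" by measurable
  have gp: "\<And>x. 0 < rho_nu d (x + hs)" using rho_pos(1)[OF d] by simp
  have gm: "(\<lambda>x. rho_nu d (x + hs)) \<in> borel_measurable borel" by measurable
  have sm: "{0::real..} \<in> sets borel" by simp
  note cs = cs_int[OF mm(1) pm gm sm gp mm(2) Kint_ind(1)[OF d, of b hs]]
  show "integrable lborel (\<lambda>x. indicator {0..} x * (f x * rho_Y d (x - a / real d + cc d * h)))"
    unfolding eqb using cs(1) rho_pos[OF d] by auto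
  have "\<bar>LINT x|lborel. indicator {0..} x * (f x * rho_Y d (x - b))\<bar>
     \<le> Lp_norm (nu_star d hs) 2 f * sqrt (LINT x|lborel. indicator {0..} x * (rho_Y d (x - b)^2 / rho_nu d (x + hs)))"
    unfolding mm(3) using cs(2) rho_pos[OF d] by auto
  also have "\<dots> \<le> Lp_norm (nu_star d hs) 2 f * sqrt (KC d * exp (al d * (b + hs)^2))"
  proof (rule mult_left_mono)
    have "0 \<le> (LINT x|lborel. f x^2 * rho_nu d (x + hs))"
      using gp by (intro integral_nonneg_AE AE_I2) (simp add: less_imp_le)
    then show "0 \<le> Lp_norm (nu_star d hs) 2 f" unfolding mm(3) by simp
  qed (use Kint_ind(2)[OF d, of b hs] in simp)
  finally show "\<bar>LINT x|lborel. indicator {0..} x * (f x * rho_Y d (x - a / real d + cc d * h))\<bar>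
       \<le> Lp_norm (nu_star d hs) 2 f * sqrt (KC d * exp (al d * (a / real d - cc d * h + hs)^2))"
    unfolding eqb b_def .
qed

lemma H_eq: "H_op d h f a = indicator {0..} a *
    (LINT x|lborel. indicator {0..} x * (f x * rho_Y d (x - a / real d + cc d * h)))"
  unfolding H_op_def set_lebesgue_integral_def cc_def by simp

lemma H_bound:
  assumes d: "d \<ge> 2" and m: "memLp (nu_star d hs) 2 f"
  shows "\<bar>H_op d h f a\<bar> \<le> Lp_norm (nu_star d hs) 2 f * sqrt (KC d * exp (al d * (a / real d - cc d * h + hs)^2))"
proof -
  have "\<bar>H_op d h f a\<bar> \<le> \<bar>LINT x|lborel. indicator {0..} x * (f x * rho_Y d (x - a / real d + cc d * h))\<bar>"
    unfolding H_eq by (simp add: indicator_def abs_mult)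
  also note Hint(2)[OF d m]
  finally show ?thesis .
qed

lemma H_meas:
  assumes [measurable]: "f \<in> borel_measurable borel" and d: "d \<ge> 2" and [measurable]: "g \<in> borel_measurable borel"
  shows "(\<lambda>a. H_op d h f (g a)) \<in> borel_measurable borel"
  unfolding H_eq by measurable




lemma quad_int:
  fixes P K u v :: real assumes "K < P"
  shows "integrable lborel (\<lambda>a. exp (- P * (a + u)^2 + K * (a + v)^2))"
proof -
  have pp: "P - K > 0" using assms by simp
  have e: "- P * (a + u)^2 + K * (a + v)^2 = - (P - K) * a^2 + (2*K* v - 2*P*u) * a + (K* v^2 - P*u^2)" for a
    by (simp add: power2_eq_square algebra_simps)
  show ?thesis unfolding e using gauss(1)[OF pp] by simp
qed

definition GG :: "nat \<Rightarrow> real \<Rightarrow> real \<Rightarrow> real \<Rightarrow> real" where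
  "GG d hs h a = sqrt (KC d * exp (al d * (a / real d - cc d * h + hs)^2))"

lemma GG_nonneg: "d \<ge> 2 \<Longrightarrow> GG d hs h a \<ge> 0"
  using consts_pos by (simp add: GG_def less_imp_le)

lemma GG_meas[measurable]: "GG d hs h \<in> borel_measurable borel"
  unfolding GG_def by measurable

lemma GG_powr: assumes d: "d \<ge> 2"
  shows "GG d hs h a powr (2 * real d) = KC d powr real d * exp (al d * (a / real d - cc d * h + hs)^2 * real d)"
proof -
  have k: "KC d > 0" using consts_pos[OF d] by simp
  have "GG d hs h a powr (2 * real d) = (KC d * exp (al d * (a / real d - cc d * h + hs)^2)) powr (1/2 * (2 * real d))"
    unfolding GG_def using k by (simp add: powr_half_sqrt[symmetric] powr_powr)
  also have "\<dots> = (KC d * exp (al d * (a / real d - cc d * h + hs)^2)) powr real d" by simp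
  also have "\<dots> = KC d powr real d * exp (al d * (a / real d - cc d * h + hs)^2 * real d)"
    using k by (simp add: powr_mult exp_powr_real)
  finally show ?thesis .
qed

lemma GG_int: assumes d: "d \<ge> 2"
  shows "integrable lborel (\<lambda>a. rho_nu d (a + hs) * GG d hs h (a + s) powr (2 * real d))"
proof -
  note cp = consts_pos[OF d]
  define v where "v = s + real d * (hs - cc d * h)"
  have e: "rho_nu d (a + hs) * GG d hs h (a + s) powr (2 * real d)
     = (cN d * KC d powr real d) * exp (- BB d * (a + hs)^2 + (al d / real d) * (a + v)^2)" for a
  proof -
    have "al d * ((a + s) / real d - cc d * h + hs)^2 * real d = (al d / real d) * (a + v)^2"
      using d unfolding v_def by (simp add: field_simps power2_eq_square)
    then show ?thesis unfolding GG_powr[OF d] rhoN_eq[OF d] by (simp add: exp_add[symmetric])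
  qed
  have "al d / real d < BB d" using cp d by (simp add: divide_less_eq mult.commute)
  then show ?thesis unfolding e using quad_int[of "al d / real d" "BB d" hs v] by simp
qed




lemma density_conv:
  assumes d: "d \<ge> 2" and [measurable]: "F \<in> borel_measurable borel"
  shows "integrable (nu_star d hs) F \<longleftrightarrow> integrable lborel (\<lambda>a. rho_nu d (a + hs) * F a)"
    "integral\<^sup>L (nu_star d hs) F = (LINT a|lborel. rho_nu d (a + hs) * F a)"
proof -
  have nn: "AE x in lborel. 0 \<le> rho_nu d (x + hs)" using rho_pos[OF d] by (simp add: less_imp_le)
  show "integrable (nu_star d hs) F \<longleftrightarrow> integrable lborel (\<lambda>a. rho_nu d (a + hs) * F a)"
    unfolding nu_star_def by (subst integrable_density) (auto simp: nn)
  show "integral\<^sup>L (nu_star d hs) F = (LINT a|lborel. rho_nu d (a + hs) * F a)"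
    unfolding nu_star_def by (subst integral_density) (auto simp: nn)
qed

lemma Lp_nonneg: "Lp_norm M p f \<ge> 0"
  unfolding Lp_norm_def by simp

lemma partA:
  assumes d: "d \<ge> 2"
  shows "\<exists>C::real. \<forall>f. memLp (nu_star d hs) 2 f \<longrightarrow>
            memLp (nu_star d hs) (2 * real d) (theta s (H_op d h f)) \<and>
            Lp_norm (nu_star d hs) (2 * real d) (theta s (H_op d h f))
              \<le> C * Lp_norm (nu_star d hs) 2 f"
proof -
  define I where "I = (LINT a|lborel. rho_nu d (a + hs) * GG d hs h (a + s) powr (2 * real d))"
  have dpos: "2 * real d > 0" using d by simp
  have rp: "\<And>a. rho_nu d a > 0" using rho_pos[OF d] by simp
  show ?thesis
  proof (intro exI allI impI)
    fix f assume m: "memLp (nu_star d hs) 2 f"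
    define N where "N = Lp_norm (nu_star d hs) 2 f"
    have N0: "N \<ge> 0" unfolding N_def by (rule Lp_nonneg)
    define T where "T = theta s (H_op d h f)"
    have Ta: "T a = H_op d h f (a + s)" for a unfolding T_def theta_def by simp
    have fm[measurable]: "f \<in> borel_measurable borel" using memLp2(1)[OF d m] .
    have Tm[measurable]: "T \<in> borel_measurable borel"
      unfolding T_def theta_def by (rule H_meas[OF fm d]) simp
    have b1: "\<bar>T a\<bar> \<le> N * GG d hs h (a + s)" for a
      unfolding Ta N_def GG_def using H_bound[OF d m, of h "a + s"] by simp
    have b2: "\<bar>T a\<bar> powr (2 * real d) \<le> N powr (2 * real d) * GG d hs h (a + s) powr (2 * real d)" for a
    proof -
      have "\<bar>T a\<bar> powr (2 * real d) \<le> (N * GG d hs h (a + s)) powr (2 * real d)"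
        by (rule powr_mono2) (use b1 dpos in auto)
      then show ?thesis using N0 GG_nonneg[OF d] by (simp add: powr_mult)
    qed
    have b3: "\<bar>rho_nu d (a + hs) * \<bar>T a\<bar> powr (2 * real d)\<bar>
        \<le> N powr (2 * real d) * (rho_nu d (a + hs) * GG d hs h (a + s) powr (2 * real d))" for a
    proof -
      have "\<bar>rho_nu d (a + hs) * \<bar>T a\<bar> powr (2 * real d)\<bar> = rho_nu d (a + hs) * \<bar>T a\<bar> powr (2 * real d)"
        using rp[of "a + hs"] by (simp add: abs_mult)
      also have "\<dots> \<le> rho_nu d (a + hs) * (N powr (2 * real d) * GG d hs h (a + s) powr (2 * real d))"
        by (rule mult_left_mono[OF b2]) (use rp[of "a + hs"] in simp)
      finally show ?thesis by (simp add: algebra_simps)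
    qed
    have iw: "integrable lborel (\<lambda>a. N powr (2 * real d) * (rho_nu d (a + hs) * GG d hs h (a + s) powr (2 * real d)))"
      using GG_int[OF d, of hs h s] by simp
    have iT: "integrable lborel (\<lambda>a. rho_nu d (a + hs) * \<bar>T a\<bar> powr (2 * real d))"
      by (rule Bochner_Integration.integrable_bound[OF iw]) (auto intro!: AE_I2 order_trans[OF b3])
    have mT: "memLp (nu_star d hs) (2 * real d) T"
      unfolding memLp_def using density_conv(1)[OF d, of "\<lambda>a. \<bar>T a\<bar> powr (2 * real d)" hs] iT
      by (simp add: nu_star_def)
    have "(LINT a|nu_star d hs. \<bar>T a\<bar> powr (2 * real d)) = (LINT a|lborel. rho_nu d (a + hs) * \<bar>T a\<bar> powr (2 * real d))"
      by (rule density_conv(2)[OF d]) simp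
    also have "\<dots> \<le> (LINT a|lborel. N powr (2 * real d) * (rho_nu d (a + hs) * GG d hs h (a + s) powr (2 * real d)))"
      by (rule integral_mono[OF iT iw]) (rule order_trans[OF abs_ge_self b3])
    also have "\<dots> = N powr (2 * real d) * I" unfolding I_def by simp
    finally have le: "(LINT a|nu_star d hs. \<bar>T a\<bar> powr (2 * real d)) \<le> N powr (2 * real d) * I" .
    have i0: "0 \<le> (LINT a|nu_star d hs. \<bar>T a\<bar> powr (2 * real d))"
      by (intro integral_nonneg_AE AE_I2) simp
    have I0: "0 \<le> I" unfolding I_def
      by (intro integral_nonneg_AE AE_I2) (use rp in \<open>simp add: less_imp_le\<close>)
    have "Lp_norm (nu_star d hs) (2 * real d) T \<le> (N powr (2 * real d) * I) powr (1 / (2 * real d))"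
      unfolding Lp_norm_def by (rule powr_mono2[OF _ i0 le]) (use dpos in simp)
    also have "\<dots> = N * I powr (1 / (2 * real d))"
      using N0 I0 dpos by (simp add: powr_mult powr_powr)
    finally show "memLp (nu_star d hs) (2 * real d) (theta s (H_op d h f)) \<and>
            Lp_norm (nu_star d hs) (2 * real d) (theta s (H_op d h f))
              \<le> I powr (1 / (2 * real d)) * Lp_norm (nu_star d hs) 2 f"
      using mT unfolding T_def N_def by (simp add: mult.commute)
  qed
qed




lemma dct_at:
  fixes s :: "real \<Rightarrow> 'a \<Rightarrow> real" and f w :: "'a \<Rightarrow> real"
  assumes fm: "f \<in> borel_measurable M" and sm: "\<And>t. s t \<in> borel_measurable M" and wi: "integrable M w"
    and lim: "\<And>x. ((\<lambda>t. s t x) \<longlongrightarrow> f x) (at h)"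
    and bnd: "\<And>t x. \<bar>t - h\<bar> < 1 \<Longrightarrow> \<bar>s t x\<bar> \<le> w x"
  shows "((\<lambda>t. LINT x|M. s t x) \<longlongrightarrow> (LINT x|M. f x)) (at h)"
  unfolding tendsto_at_iff_sequentially[where s=UNIV]
proof (intro allI impI)
  fix X :: "nat \<Rightarrow> real" assume X1: "\<forall>i. X i \<in> UNIV - {h}" and X2: "X \<longlonglongrightarrow> h"
  from X2 have "\<forall>\<^sub>F n in sequentially. dist (X n) h < 1" by (rule tendstoD) simp
  then obtain N where N: "\<And>n. n \<ge> N \<Longrightarrow> \<bar>X n - h\<bar> < 1"
    unfolding eventually_sequentially dist_real_def by blast
  show "((\<lambda>t. LINT x|M. s t x) \<circ> X) \<longlonglongrightarrow> (LINT x|M. f x)"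
    unfolding comp_def
  proof (rule LIMSEQ_offset[where k=N], rule integral_dominated_convergence[where w=w])
    show "AE x in M. norm (s (X (n + N)) x) \<le> w x" for n
      using N[of "n + N"] bnd by (intro AE_I2) simp
    show "AE x in M. (\<lambda>n. s (X (n + N)) x) \<longlonglongrightarrow> f x"
    proof (intro AE_I2)
      fix x
      have Y1: "\<forall>i. X (i + N) \<in> UNIV - {h}" using X1 by simp
      have Y2: "(\<lambda>i. X (i + N)) \<longlonglongrightarrow> h" using X2 by (rule LIMSEQ_ignore_initial_segment)
      from lim[of x, unfolded tendsto_at_iff_sequentially[where s=UNIV]] Y1 Y2
      show "(\<lambda>n. s (X (n + N)) x) \<longlonglongrightarrow> f x" by (auto simp: comp_def)
    qed
  qed (use fm sm wi in auto)
qed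




lemma BA: assumes d: "d \<ge> 2" shows "BB d < AA d / 2"
proof -
  have d0: "real d > 0" using d by simp
  have "(real d - 1) * (real d + 1) < real d * real d" by (simp add: algebra_simps)
  then have "(real d - 1) / (2 * real d) < real d / (2 * (real d + 1))"
    using d0 by (simp add: divide_simps) (simp add: algebra_simps)
  then show ?thesis by (simp add: AA_def BB_def algebra_simps)
qed

lemma cc_nonneg: "d \<ge> 2 \<Longrightarrow> cc d \<ge> 0" by (simp add: cc_def)

lemma rhoY_quot_bound:
  assumes d: "d \<ge> 2" and t: "\<bar>t - h\<bar> < 1"
  shows "rho_Y d (x - a / real d + cc d * t)^2 / rho_nu d (x + hs)
    \<le> (cY d^2 / cN d * exp (AA d * (\<bar>a\<bar> / real d + cc d * (\<bar>h\<bar> + 1))^2))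
       * exp (- (AA d / 2) * (x + 0)^2 + BB d * (x + hs)^2)"
proof -
  note cp = consts_pos[OF d]
  define b where "b = a / real d - cc d * t"
  define R where "R = \<bar>a\<bar> / real d + cc d * (\<bar>h\<bar> + 1)"
  have bR: "\<bar>b\<bar> \<le> R"
  proof -
    have "\<bar>b\<bar> \<le> \<bar>a / real d\<bar> + \<bar>cc d * t\<bar>" unfolding b_def by linarith
    also have "\<bar>cc d * t\<bar> \<le> cc d * (\<bar>h\<bar> + 1)" using cc_nonneg[OF d] t
      by (simp add: abs_mult mult_left_mono)
    finally show ?thesis unfolding R_def using d by simp
  qed
  have b2: "b^2 \<le> R^2" using bR by (metis abs_ge_zero abs_le_square_iff order_trans power2_abs power_mono abs_ge_self)
  have xy: "x^2 \<le> 2 * (x - b)^2 + 2 * b^2"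
  proof -
    have "0 \<le> (x - 2*b)^2" by simp
    then show ?thesis by (simp add: power2_eq_square algebra_simps)
  qed
  have ex: "- AA d * (x - b)^2 \<le> AA d * R^2 + (- (AA d / 2) * (x + 0)^2)"
  proof -
    have "- ((x - b)^2) \<le> R^2 - x^2/2" using xy b2 by simp
    from mult_left_mono[OF this, of "AA d"] cp show ?thesis by (simp add: algebra_simps)
  qed
  have "rho_Y d (x - a / real d + cc d * t)^2 / rho_nu d (x + hs)
      = cY d^2 / cN d * (exp (- (AA d / 2) * (x - b)^2) ^ 2 / exp (- BB d * (x + hs)^2))"
    unfolding rhoY_eq[OF d] rhoN_eq[OF d] b_def by (simp add: power_mult_distrib algebra_simps)
  also have "\<dots> = cY d^2 / cN d * exp (- AA d * (x - b)^2 + BB d * (x + hs)^2)"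
    unfolding exp_sq_div by simp
  also have "\<dots> \<le> cY d^2 / cN d * exp (AA d * R^2 + (- (AA d / 2) * (x + 0)^2) + BB d * (x + hs)^2)"
    using ex cp by (intro mult_left_mono) auto
  also have "\<dots> = (cY d^2 / cN d * exp (AA d * R^2)) * exp (- (AA d / 2) * (x + 0)^2 + BB d * (x + hs)^2)"
    by (simp add: exp_add[symmetric] add.assoc)
  finally show ?thesis unfolding R_def .
qed




lemma H_cont:
  assumes d: "d \<ge> 2" and m: "memLp (nu_star d hs) 2 f"
  shows "((\<lambda>t. H_op d t f a) \<longlongrightarrow> H_op d h f a) (at h)"
proof -
  note cp = consts_pos[OF d]
  note mm = memLp2[OF d m]
  have fm[measurable]: "f \<in> borel_measurable borel" by (rule mm(1))
  define CW where "CW = cY d^2 / cN d * exp (AA d * (\<bar>a\<bar> / real d + cc d * (\<bar>h\<bar> + 1))^2)"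
  define w where "w x = (f x^2 * rho_nu d (x + hs) + CW * exp (- (AA d / 2) * (x + 0)^2 + BB d * (x + hs)^2)) / 2" for x
  have wi: "integrable lborel w"
  proof -
    have "integrable lborel (\<lambda>x. exp (- (AA d / 2) * (x + 0)^2 + BB d * (x + hs)^2))"
      by (rule quad_int) (rule BA[OF d])
    then show ?thesis unfolding w_def using mm(2) by simp
  qed
  have "((\<lambda>t. LINT x|lborel. indicator {0..} x * (f x * rho_Y d (x - a / real d + cc d * t)))
      \<longlongrightarrow> (LINT x|lborel. indicator {0..} x * (f x * rho_Y d (x - a / real d + cc d * h)))) (at h)"
  proof (rule dct_at[where w=w])
    show "(\<lambda>x. indicator {0..} x * (f x * rho_Y d (x - a / real d + cc d * h))) \<in> borel_measurable lborel"
      by measurable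
    show "(\<lambda>x. indicator {0..} x * (f x * rho_Y d (x - a / real d + cc d * t))) \<in> borel_measurable lborel" for t
      by measurable
    show "integrable lborel w" by (rule wi)
    show "((\<lambda>t. indicator {0..} x * (f x * rho_Y d (x - a / real d + cc d * t))) \<longlongrightarrow>
        indicator {0..} x * (f x * rho_Y d (x - a / real d + cc d * h))) (at h)" for x
      unfolding rhoY_eq[OF d] by (intro tendsto_intros)
    show "\<bar>indicator {0..} x * (f x * rho_Y d (x - a / real d + cc d * t))\<bar> \<le> w x" if t: "\<bar>t - h\<bar> < 1" for t x
    proof -
      have "\<bar>indicator {0..} x * (f x * rho_Y d (x - a / real d + cc d * t))\<bar> \<le> \<bar>f x * rho_Y d (x - a / real d + cc d * t)\<bar>"
        by (simp add: indicator_def abs_mult)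
      also have "\<dots> \<le> (1 * (f x^2 * rho_nu d (x + hs)) + rho_Y d (x - a / real d + cc d * t)^2 / rho_nu d (x + hs) / 1) / 2"
        by (rule amgm_pt) (use rho_pos[OF d] in auto)
      also have "\<dots> \<le> w x"
      proof -
        have q: "rho_Y d (x - a / real d + cc d * t)^2 / rho_nu d (x + hs) \<le> CW * exp (- (AA d / 2) * (x + 0)^2 + BB d * (x + hs)^2)"
          unfolding CW_def by (rule rhoY_quot_bound[OF d t])
        show ?thesis unfolding w_def mult_1 div_by_1
          by (intro divide_right_mono add_left_mono q) simp
      qed
      finally show ?thesis .
    qed
  qed
  then show ?thesis unfolding H_eq by (intro tendsto_intros)
qed




lemma GG_between:
  assumes d: "d \<ge> 2" and "t1 \<le> t" "t \<le> t2"
  shows "GG d hs t a \<le> GG d hs t1 a + GG d hs t2 a"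
proof -
  note cp = consts_pos[OF d]
  define y where "y t = a / real d - cc d * t + hs" for t
  have y1: "y t \<le> y t1" "y t2 \<le> y t" unfolding y_def using assms cc_nonneg[OF d]
    by (auto intro: mult_left_mono)
  have G: "GG d hs t a = sqrt (KC d * exp (al d * (y t)^2))" for t unfolding GG_def y_def by simp
  have mono: "GG d hs t a \<le> GG d hs t' a" if "(y t)^2 \<le> (y t')^2" for t'
    unfolding G using that cp by (intro real_sqrt_le_mono mult_left_mono) (auto intro: mult_left_mono)
  have "(y t)^2 \<le> (y t1)^2 \<or> (y t)^2 \<le> (y t2)^2"
  proof (cases "y t \<ge> 0")
    case True then show ?thesis using y1 by (auto intro!: power_mono)
  next
    case False
    have "(- y t)^2 \<le> (- y t2)^2" using y1 False by (intro power_mono) auto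
    then have "(y t)^2 \<le> (y t2)^2" by simp
    then show ?thesis by simp
  qed
  then show ?thesis using mono[of t1] mono[of t2] GG_nonneg[OF d, of hs t1 a] GG_nonneg[OF d, of hs t2 a] by auto
qed

lemma pow3:
  fixes x y z p :: real assumes "x \<ge> 0" "y \<ge> 0" "z \<ge> 0" "p \<ge> 0"
  shows "(x + y + z) powr p \<le> 3 powr p * (x powr p + y powr p + z powr p)"
proof -
  define m where "m = max x (max y z)"
  have "x + y + z \<le> 3 * m" unfolding m_def by simp
  then have "(x + y + z) powr p \<le> (3 * m) powr p" using assms by (intro powr_mono2) auto
  also have "\<dots> = 3 powr p * m powr p" using assms by (simp add: powr_mult m_def)
  also have "m powr p \<le> x powr p + y powr p + z powr p"
    unfolding m_def by (auto simp: max_def add_increasing add_increasing2)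
  then have "3 powr p * m powr p \<le> 3 powr p * (x powr p + y powr p + z powr p)" by (simp add: mult_left_mono)
  finally show ?thesis .
qed




lemma partB:
  assumes d: "d \<ge> 2" and m: "memLp (nu_star d hs) 2 f"
  shows "((\<lambda>t. Lp_norm (nu_star d hs) (2 * real d) (\<lambda>a. H_op d t f a - H_op d h f a)) \<longlongrightarrow> 0) (at h)"
proof -
  define p where "p = 2 * real d"
  have p0: "p > 0" using d by (simp add: p_def)
  define N where "N = Lp_norm (nu_star d hs) 2 f"
  have N0: "N \<ge> 0" unfolding N_def by (rule Lp_nonneg)
  have fm[measurable]: "f \<in> borel_measurable borel" by (rule memLp2(1)[OF d m])
  have Hm[measurable]: "(\<lambda>a. H_op d t f a) \<in> borel_measurable borel" for t
    using H_meas[OF fm d, of "\<lambda>a. a" t] by simp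
  have rp: "\<And>a. rho_nu d a > 0" using rho_pos[OF d] by simp
  define E where "E t = (LINT a|lborel. rho_nu d (a + hs) * \<bar>H_op d t f a - H_op d h f a\<bar> powr p)" for t
  have LE: "Lp_norm (nu_star d hs) (2 * real d) (\<lambda>a. H_op d t f a - H_op d h f a) = E t powr (1 / p)" for t
    unfolding Lp_norm_def E_def p_def by (subst density_conv(2)[OF d]) simp_all
  define w where "w a = rho_nu d (a + hs) * (N powr p * 3 powr p *
      (GG d hs (h - 1) a powr p + GG d hs (h + 1) a powr p + GG d hs h a powr p))" for a
  have wi: "integrable lborel w"
  proof -
    have "integrable lborel (\<lambda>a. rho_nu d (a + hs) * GG d hs t (a + 0) powr (2 * real d))" for t
      by (rule GG_int[OF d])
    then have i: "integrable lborel (\<lambda>a. rho_nu d (a + hs) * GG d hs t a powr p)" for t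
      unfolding p_def by simp
    have "integrable lborel (\<lambda>a. (N powr p * 3 powr p) * (rho_nu d (a + hs) * GG d hs (h - 1) a powr p
       + rho_nu d (a + hs) * GG d hs (h + 1) a powr p + rho_nu d (a + hs) * GG d hs h a powr p))"
      using i[of "h - 1"] i[of "h + 1"] i[of h] by (intro integrable_mult_right Bochner_Integration.integrable_add) auto
    then show ?thesis unfolding w_def by (simp add: algebra_simps)
  qed
  define z :: "real \<Rightarrow> real" where "z = (\<lambda>a. 0)"
  have "(E \<longlongrightarrow> (LINT a|lborel. z a)) (at h)"
    unfolding E_def
  proof (rule dct_at[where w=w])
    show "z \<in> borel_measurable lborel" by (simp add: z_def)
    show "(\<lambda>a. rho_nu d (a + hs) * \<bar>H_op d t f a - H_op d h f a\<bar> powr p) \<in> borel_measurable lborel" for t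
      by measurable
    show "integrable lborel w" by (rule wi)
    show "((\<lambda>t. rho_nu d (a + hs) * \<bar>H_op d t f a - H_op d h f a\<bar> powr p) \<longlongrightarrow> z a) (at h)" for a
    proof -
      have "((\<lambda>t. H_op d t f a - H_op d h f a) \<longlongrightarrow> H_op d h f a - H_op d h f a) (at h)"
        by (intro tendsto_diff H_cont[OF d m] tendsto_const)
      then have "((\<lambda>t. \<bar>H_op d t f a - H_op d h f a\<bar>) \<longlongrightarrow> 0) (at h)"
        by (intro tendsto_rabs_zero) simp
      then have "((\<lambda>t. \<bar>H_op d t f a - H_op d h f a\<bar> powr p) \<longlongrightarrow> 0) (at h)"
        by (rule tendsto_zero_powrI) (use p0 in auto)
      then have "((\<lambda>t. rho_nu d (a + hs) * \<bar>H_op d t f a - H_op d h f a\<bar> powr p) \<longlongrightarrow> rho_nu d (a + hs) * 0) (at h)"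
        by (intro tendsto_mult tendsto_const)
      then show ?thesis by (simp add: z_def)
    qed
    show "\<bar>rho_nu d (a + hs) * \<bar>H_op d t f a - H_op d h f a\<bar> powr p\<bar> \<le> w a" if t: "\<bar>t - h\<bar> < 1" for t a
    proof -
      have G0: "GG d hs h a \<ge> 0" "GG d hs (h - 1) a \<ge> 0" "GG d hs (h + 1) a \<ge> 0" using GG_nonneg[OF d] by auto
      have bt: "\<bar>H_op d t f a\<bar> \<le> N * GG d hs t a" unfolding N_def GG_def by (rule H_bound[OF d m])
      have bh: "\<bar>H_op d h f a\<bar> \<le> N * GG d hs h a" unfolding N_def GG_def by (rule H_bound[OF d m])
      have gb: "GG d hs t a \<le> GG d hs (h - 1) a + GG d hs (h + 1) a"
        by (rule GG_between[OF d]) (use t in auto)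
      have "\<bar>H_op d t f a - H_op d h f a\<bar> \<le> N * GG d hs t a + N * GG d hs h a" using bt bh by linarith
      also have "\<dots> \<le> N * (GG d hs (h - 1) a + GG d hs (h + 1) a + GG d hs h a)"
        using mult_left_mono[OF gb N0] by (simp add: algebra_simps)
      finally have b1: "\<bar>H_op d t f a - H_op d h f a\<bar> \<le> N * (GG d hs (h - 1) a + GG d hs (h + 1) a + GG d hs h a)" .
      have "\<bar>H_op d t f a - H_op d h f a\<bar> powr p \<le> (N * (GG d hs (h - 1) a + GG d hs (h + 1) a + GG d hs h a)) powr p"
        by (rule powr_mono2[OF _ _ b1]) (use p0 in auto)
      also have "\<dots> = N powr p * (GG d hs (h - 1) a + GG d hs (h + 1) a + GG d hs h a) powr p"
        using N0 G0 by (simp add: powr_mult)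
      also have "\<dots> \<le> N powr p * (3 powr p * (GG d hs (h - 1) a powr p + GG d hs (h + 1) a powr p + GG d hs h a powr p))"
        by (intro mult_left_mono pow3 G0) (use p0 in auto)
      finally have b2: "\<bar>H_op d t f a - H_op d h f a\<bar> powr p \<le> N powr p * (3 powr p * (GG d hs (h - 1) a powr p + GG d hs (h + 1) a powr p + GG d hs h a powr p))" .
      have "\<bar>rho_nu d (a + hs) * \<bar>H_op d t f a - H_op d h f a\<bar> powr p\<bar> = rho_nu d (a + hs) * \<bar>H_op d t f a - H_op d h f a\<bar> powr p"
        using rp[of "a + hs"] by (simp add: abs_mult)
      also have "\<dots> \<le> rho_nu d (a + hs) * (N powr p * (3 powr p * (GG d hs (h - 1) a powr p + GG d hs (h + 1) a powr p + GG d hs h a powr p)))"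
        by (rule mult_left_mono[OF b2]) (use rp[of "a + hs"] in simp)
      finally show ?thesis unfolding w_def by (simp add: algebra_simps)
    qed
  qed
  then have E0: "(E \<longlongrightarrow> 0) (at h)" by (simp add: z_def)
  have "((\<lambda>t. E t powr (1 / p)) \<longlongrightarrow> 0) (at h)"
  proof (rule tendsto_zero_powrI[OF E0 tendsto_const])
    show "\<forall>\<^sub>F t in at h. 0 \<le> E t"
      unfolding E_def by (intro always_eventually allI integral_nonneg_AE AE_I2) (use rp in \<open>simp add: less_imp_le\<close>)
  qed (use p0 in simp)
  then show ?thesis unfolding LE .
qed


theorem lemma6p3:
  fixes d :: nat and hstar :: real
  assumes "d \<ge> 2" and "hstar > 0"
  shows "(\<forall>h s. \<exists>C::real. \<forall>f. memLp (nu_star d hstar) 2 f \<longrightarrow>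
            memLp (nu_star d hstar) (2 * real d) (theta s (H_op d h f)) \<and>
            Lp_norm (nu_star d hstar) (2 * real d) (theta s (H_op d h f))
              \<le> C * Lp_norm (nu_star d hstar) 2 f)
       \<and> (\<forall>f. memLp (nu_star d hstar) 2 f \<longrightarrow>
            (\<forall>h \<in> {hstar - 1 <..< hstar + 1}.
               ((\<lambda>h'. Lp_norm (nu_star d hstar) (2 * real d)
                        (\<lambda>a. H_op d h' f a - H_op d h f a)) \<longlongrightarrow> 0)
               (at h within {hstar - 1 <..< hstar + 1})))"
  proof (intro conjI allI impI ballI)
  fix h s
  show "\<exists>C::real. \<forall>f. memLp (nu_star d hstar) 2 f \<longrightarrow>
            memLp (nu_star d hstar) (2 * real d) (theta s (H_op d h f)) \<and>
            Lp_norm (nu_star d hstar) (2 * real d) (theta s (H_op d h f))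
              \<le> C * Lp_norm (nu_star d hstar) 2 f"
    by (rule partA[OF assms(1)])
next
  fix f h assume m: "memLp (nu_star d hstar) 2 f"
  show "((\<lambda>h'. Lp_norm (nu_star d hstar) (2 * real d)
                        (\<lambda>a. H_op d h' f a - H_op d h f a)) \<longlongrightarrow> 0)
               (at h within {hstar - 1 <..< hstar + 1})"
    by (rule tendsto_within_subset[OF partB[OF assms(1) m]]) simp
qed

end
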